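(* Let $\mathbf{W}=\langle W;\to,\neg,{}^{+},{}^{-},1\rangle$ be a quasi-Wajsberg* algebra and let $\mu,\tau$ be the relations on $W$ given by: $\langle x,y\rangle\in\mu$ iff $x\le y$ and $y\le x$; $\langle x,y\rangle\in\tau$ iff $x=y$ or $x,y\in R(W)$. Then: (1) for any $x,y\in W$, $\langle x,y\rangle\in\mu$ iff $0\to x=0\to y$; (2) $\mu\cap\tau=\Delta$, the diagonal relation on $W$; (3) if $G(\mu\cup\tau)$ denotes the union of all finite relational products $\theta_1\circ\theta_2\circ\cdots\circ\theta_k$ ($k<\infty$) with each $\theta_i\in\{\mu,\tau\}$, then $G(\mu\cup\tau)=\nabla$, the all relation $W\times W$; (4) $\mu\circ\tau=\nabla$ iff $x/\mu\cap y/\tau\neq\varnothing$ for all $x,y\in W$.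
   Context: A quasi-Wajsberg* algebra is an algebra $\langle W;\to,\neg,{}^{+},{}^{-},1\rangle$ of type $\langle2,1,1,1,0\rangle$ such that for all $x,y,z\in W$: (QW*1) $x\to y=\neg y\to\neg x$; (QW*2) $(x\to 1)\to((y\to 1)\to z)=(y\to 1)\to((x\to 1)\to z)$; (QW*3) $(1\to x)\to 1=1$; (QW*4) $(z\to z)\to(x\to y)=x\to y$; (QW*5) $(1\to 1)\to x^{+}=((1\to 1)\to x)^{+}=(x\to 1)\to 1$ and $(1\to 1)\to x^{-}=((1\to 1)\to x)^{-}=(x\to\neg 1)\to\neg 1$; (QW*6) $x\to y=(y^{+}\to x^{-})\to(x^{+}\to y^{-})$; (QW*7) $\neg(x\to y)=y\to x$; (QW*8) $\neg\neg x=x$; (QW*9) $(x\to(\neg x\to y))^{+}=x^{+}\to(\neg x^{+}\to y^{+})$; (QW*10) $x\vee y=y\vee x$; (QW*11) $x\vee(y\vee z)=(x\vee y)\vee z$; (QW*12) $x\to(y\vee z)=(x\to y)\vee(x\to z)$; where $x\vee y:=((x^{+}\to y^{+})^{+}\to(\neg x)^{-})\to((y^{-}\to x^{-})^{-}\to x^{-})$. Conventions: ${}^+,{}^-$ bind tighter than $\neg$, which binds tighter than $\to$. Put $0:=1\to 1$, $x\le y$ iff $x\vee y=0\to y$, and $R(W):=\{x\in W:0\to x=x\}$. $x/\theta$ denotes the $\theta$-class of $x$, and $\circ$ is relational composition: $\langle x,y\rangle\in\mu\circ\tau$ iff there is $z$ with $\langle x,z\rangle\in\mu$ and $\langle z,y\rangle\in\tau$.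 *)

theory Defs
  imports Main
begin

text \<open>Quasi-Wajsberg* algebras. The universe of the algebra is the whole type 'a;
  the operations are: imp (\<rightarrow>), neg (\<not>), pl (^+), mi (^-), one (1).\<close>

definition qw_join :: "('a \<Rightarrow> 'a \<Rightarrow> 'a) \<Rightarrow> ('a \<Rightarrow> 'a) \<Rightarrow> ('a \<Rightarrow> 'a) \<Rightarrow> ('a \<Rightarrow> 'a) \<Rightarrow> 'a \<Rightarrow> 'a \<Rightarrow> 'a" where
  "qw_join imp neg pl mi x y =
     imp (imp (pl (imp (pl x) (pl y))) (mi (neg x)))
         (imp (mi (imp (mi y) (mi x))) (mi x))"

definition quasi_wajsberg ::
  "('a \<Rightarrow> 'a \<Rightarrow> 'a) \<Rightarrow> ('a \<Rightarrow> 'a) \<Rightarrow> ('a \<Rightarrow> 'a) \<Rightarrow> ('a \<Rightarrow> 'a) \<Rightarrow> 'a \<Rightarrow> bool" where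
  "quasi_wajsberg imp neg pl mi one \<longleftrightarrow>
     (\<forall>x y. imp x y = imp (neg y) (neg x)) \<and>
     (\<forall>x y z. imp (imp x one) (imp (imp y one) z) = imp (imp y one) (imp (imp x one) z)) \<and>
     (\<forall>x. imp (imp one x) one = one) \<and>
     (\<forall>x y z. imp (imp z z) (imp x y) = imp x y) \<and>
     (\<forall>x. imp (imp one one) (pl x) = pl (imp (imp one one) x) \<and>
          pl (imp (imp one one) x) = imp (imp x one) one) \<and>
     (\<forall>x. imp (imp one one) (mi x) = mi (imp (imp one one) x) \<and>
          mi (imp (imp one one) x) = imp (imp x (neg one)) (neg one)) \<and>
     (\<forall>x y. imp x y = imp (imp (pl y) (mi x)) (imp (pl x) (mi y))) \<and>
     (\<forall>x y. neg (imp x y) = imp y x) \<and>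
     (\<forall>x. neg (neg x) = x) \<and>
     (\<forall>x y. pl (imp x (imp (neg x) y)) = imp (pl x) (imp (neg (pl x)) (pl y))) \<and>
     (\<forall>x y. qw_join imp neg pl mi x y = qw_join imp neg pl mi y x) \<and>
     (\<forall>x y z. qw_join imp neg pl mi x (qw_join imp neg pl mi y z)
              = qw_join imp neg pl mi (qw_join imp neg pl mi x y) z) \<and>
     (\<forall>x y z. imp x (qw_join imp neg pl mi y z)
              = qw_join imp neg pl mi (imp x y) (imp x z))"

definition qw_zero :: "('a \<Rightarrow> 'a \<Rightarrow> 'a) \<Rightarrow> 'a \<Rightarrow> 'a" where
  "qw_zero imp one = imp one one"

definition qw_le :: "('a \<Rightarrow> 'a \<Rightarrow> 'a) \<Rightarrow> ('a \<Rightarrow> 'a) \<Rightarrow> ('a \<Rightarrow> 'a) \<Rightarrow> ('a \<Rightarrow> 'a) \<Rightarrow> 'a \<Rightarrow> 'a \<Rightarrow> 'a \<Rightarrow> bool" where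
  "qw_le imp neg pl mi one x y \<longleftrightarrow> qw_join imp neg pl mi x y = imp (qw_zero imp one) y"

definition qw_R :: "('a \<Rightarrow> 'a \<Rightarrow> 'a) \<Rightarrow> 'a \<Rightarrow> 'a set" where
  "qw_R imp one = {x. imp (qw_zero imp one) x = x}"

definition qw_mu :: "('a \<Rightarrow> 'a \<Rightarrow> 'a) \<Rightarrow> ('a \<Rightarrow> 'a) \<Rightarrow> ('a \<Rightarrow> 'a) \<Rightarrow> ('a \<Rightarrow> 'a) \<Rightarrow> 'a \<Rightarrow> 'a rel" where
  "qw_mu imp neg pl mi one =
     {(x, y). qw_le imp neg pl mi one x y \<and> qw_le imp neg pl mi one y x}"

definition qw_tau :: "('a \<Rightarrow> 'a \<Rightarrow> 'a) \<Rightarrow> 'a \<Rightarrow> 'a rel" where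
  "qw_tau imp one = {(x, y). x = y \<or> (x \<in> qw_R imp one \<and> y \<in> qw_R imp one)}"

definition rel_gen :: "'a rel \<Rightarrow> 'a rel \<Rightarrow> 'a rel" where
  "rel_gen \<mu> \<tau> = \<Union> {foldr (O) \<theta>s Id | \<theta>s. \<theta>s \<noteq> [] \<and> set \<theta>s \<subseteq> {\<mu>, \<tau>}}"

end

theory Submission
  imports Defs
begin

lemma join_idem_raw:
  fixes i :: "'a \<Rightarrow> 'a \<Rightarrow> 'a" and n p m :: "'a \<Rightarrow> 'a" and one :: 'a and j :: "'a \<Rightarrow> 'a \<Rightarrow> 'a"
  assumes a1: "\<And>X Y. i X Y = i (n Y) (n X)"
  and a2: "\<And>X Y Z. i (i X one) (i (i Y one) Z) = i (i Y one) (i (i X one) Z)"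
  and a3: "\<And>X. i (i one X) one = one"
  and a4: "\<And>X Y Z. i (i Z Z) (i X Y) = i X Y"
  and a5: "\<And>X. i (i one one) (p X) = p (i (i one one) X) \<and> p (i (i one one) X) = i (i X one) one"
  and a5b: "\<And>X. i (i one one) (m X) = m (i (i one one) X) \<and> m (i (i one one) X) = i (i X (n one)) (n one)"
  and a6: "\<And>X Y. i X Y = i (i (p Y) (m X)) (i (p X) (m Y))"
  and a7: "\<And>X Y. n (i X Y) = i Y X"
  and a8: "\<And>X. n (n X) = X"
  and a9: "\<And>X Y. p (i X (i (n X) Y)) = i (p X) (i (n (p X)) (p Y))"
  and jd: "\<And>X Y. j X Y = i (i (p (i (p X) (p Y))) (m (n X))) (i (m (i (m Y) (m X))) (m X))"
  and a10: "\<And>X Y. j X Y = j Y X"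
  and a11: "\<And>X Y Z. j X (j Y Z) = j (j X Y) Z"
  and a12: "\<And>X Y Z. i X (j Y Z) = j (i X Y) (i X Z)"
  shows "i (i one one) sK0 = j sK0 sK0"
proof (rule ccontr)
  assume f19: "((i (i one one) sK0) \<noteq> (j sK0 sK0))"
  have f20: "((i (i one one) sK0) \<noteq> (j sK0 sK0))" by (metis f19)
  note f8 = a7
  have f28: "(\<forall>X0 X1. ((n (i X0 X1)) = (i X1 X0)))" by (metis f8)
  note f4 = a4
  have f33: "(\<forall>X2 X0 X1. ((i X0 X1) = (i (i X2 X2) (i X0 X1))))" by (metis f4)
  have f193: "(\<forall>X2 X0 X1. ((i (i X1 X2) (i X0 X0)) = (n (i X1 X2))))" by (metis f28 f33)
  have f196: "(\<forall>X2 X0 X1. ((i X2 X1) = (i (i X1 X2) (i X0 X0))))" by (metis f193 f28)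
  have f279: "(\<forall>X0 X1. ((i X0 X0) = (i X1 X1)))" by (metis f196 f33)
  have f336: "(\<forall>X44. ((j sK0 sK0) \<noteq> (i (i X44 X44) sK0)))" by (metis f20 f279)
  note f1 = a1
  have f29: "(\<forall>X0 X1. ((i X0 X1) = (i (n X1) (n X0))))" by (metis f1)
  note f9 = a8
  have f21: "(\<forall>X0. ((n (n X0)) = X0))" by (metis f9)
  have f49: "(\<forall>X0 X1. ((i X1 (n X0)) = (i X0 (n X1))))" by (metis f29 f21)
  have f61: "(\<forall>X0 X1. ((i (n X1) X0) = (n (i X1 (n X0)))))" by (metis f28 f49)
  have f321: "(\<forall>X8 X9. ((i (n (n X8)) X8) = (n (i X9 X9))))" by (metis f61 f279)
  have f364: "(\<forall>X8 X9. ((i X8 X8) = (n (i X9 X9))))" by (metis f321 f21)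
  have f426: "(\<forall>X10 X8 X9. ((i X10 (i X8 X8)) = (i (i X9 X9) (n X10))))" by (metis f29 f364)
  have f1715: "(\<forall>X70 X68 X69. ((i (i X69 X69) X68) = (n (i (i X70 X70) (n X68)))))" by (metis f28 f426)
  have f50: "(\<forall>X2 X3 X4. ((i X4 (i X2 X3)) = (i (i X3 X2) (n X4))))" by (metis f29 f28)
  have f1811: "(\<forall>X70 X68 X69. ((i (i X69 X69) X68) = (n (i X68 (i X70 X70)))))" by (metis f1715 f50)
  have f4131: "(\<forall>X58. ((j sK0 sK0) \<noteq> (n (i sK0 (i X58 X58)))))" by (metis f336 f1811)
  note f6 = a5b
  have f24: "(\<forall>X0. ((m (i (i one one) X0)) = (i (i X0 (n one)) (n one))))" by (metis f6)
  note f3 = a3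
  have f22: "(\<forall>X0. (one = (i (i one X0) one)))" by (metis f3)
  have f38: "(\<forall>X0. ((n one) = (i one (i one X0))))" by (metis f28 f22)
  have f40: "((n one) = (i one (n one)))" by (metis f38 f38)
  have f5932: "((i (n one) (n one)) = (m (i (i one one) one)))" by (metis f24 f40)
  have f6012: "((i (n one) (n one)) = (m one))" by (metis f5932 f22)
  have f6199: "((j sK0 sK0) \<noteq> (n (i sK0 (m one))))" by (metis f4131 f6012)
  note f11 = jd
  have f32: "(\<forall>X0 X1. ((j X0 X1) = (i (i (p (i (p X0) (p X1))) (m (n X0))) (i (m (i (m X1) (m X0))) (m X0)))))" by (metis f11)
  have f19966: "(\<forall>X2 X3 X4. ((j X2 X3) = (i (i X4 X4) (j X2 X3))))" by (metis f33 f32)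
  have f6140: "(\<forall>X3. ((i X3 X3) = (m one)))" by (metis f6012 f279)
  have f20949: "(\<forall>X2 X3. ((j X2 X3) = (i (m one) (j X2 X3))))" by (metis f19966 f6140)
  note f14 = a12
  have f35: "(\<forall>X2 X0 X1. ((i X0 (j X1 X2)) = (j (i X0 X1) (i X0 X2))))" by (metis f14)
  note f12 = a10
  have f27: "(\<forall>X0 X1. ((j X0 X1) = (j X1 X0)))" by (metis f12)
  have f3120: "(\<forall>X3 X4 X5. ((j (i X3 X5) (i X3 X4)) = (i X3 (j X4 X5))))" by (metis f35 f27)
  have f5409: "(\<forall>X3 X4 X5. ((i X3 (j X4 X5)) = (i X3 (j X5 X4))))" by (metis f3120 f35)
  have f21532: "(\<forall>X2 X3. ((j X2 X3) = (i (m one) (j X3 X2))))" by (metis f20949 f5409)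
  have f21603: "(\<forall>X8 X9. ((i (j X8 X9) (m one)) = (n (j X9 X8))))" by (metis f28 f21532)
  have f19971: "(\<forall>X18 X19 X17. ((i (i (m (i (m X18) (m X17))) (m X17)) (i (p (i (p X17) (p X18))) (m (n X17)))) = (i (j X17 X18) (i X19 X19))))" by (metis f196 f32)
  have f20955: "(\<forall>X18 X17. ((i (i (m (i (m X18) (m X17))) (m X17)) (i (p (i (p X17) (p X18))) (m (n X17)))) = (i (j X17 X18) (m one))))" by (metis f19971 f6140)
  have f19965: "(\<forall>X0 X1. ((n (j X0 X1)) = (i (i (m (i (m X1) (m X0))) (m X0)) (i (p (i (p X0) (p X1))) (m (n X0))))))" by (metis f28 f32)
  have f20956: "(\<forall>X18 X17. ((i (j X17 X18) (m one)) = (n (j X17 X18))))" by (metis f20955 f19965)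
  have f23863: "(\<forall>X2 X3. ((n (j X2 X3)) = (n (j X3 X2))))" by (metis f21603 f20956)
  have f23977: "(\<forall>X4 X5. ((j X4 X5) = (n (n (j X5 X4)))))" by (metis f21 f23863)
  have f302387: "(\<forall>X11 X12. ((n (j X11 X11)) = (i (i (m (i X12 X12)) (m X11)) (i (p (i (p X11) (p X11))) (m (n X11))))))" by (metis f19965 f279)
  note f5 = a5
  have f26: "(\<forall>X0. ((p (i (i one one) X0)) = (i (i X0 one) one)))" by (metis f5)
  have f556: "(\<forall>X5. ((i (i (i one one) one) one) = (p (n (i X5 X5)))))" by (metis f26 f364)
  have f563: "(\<forall>X5. ((i (i (i one one) one) one) = (p (i X5 X5))))" by (metis f556 f28)
  have f564: "(\<forall>X5. ((i one one) = (p (i X5 X5))))" by (metis f563 f22)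
  have f303571: "(\<forall>X11 X12. ((n (j X11 X11)) = (i (i (m (i X12 X12)) (m X11)) (i (i one one) (m (n X11))))))" by (metis f302387 f564)
  have f5941: "(\<forall>X7. ((i one (n (i X7 (n one)))) = (m (i (i one one) X7))))" by (metis f24 f49)
  have f23: "(\<forall>X0. ((i (i one one) (m X0)) = (m (i (i one one) X0))))" by (metis f6)
  have f6029: "(\<forall>X7. ((i one (n (i X7 (n one)))) = (i (i one one) (m X7))))" by (metis f5941 f23)
  have f6030: "(\<forall>X7. ((i (i one one) (m X7)) = (i one (i (n one) X7))))" by (metis f6029 f28)
  have f303572: "(\<forall>X11 X12. ((n (j X11 X11)) = (i (i (m (i X12 X12)) (m X11)) (i one (i (n one) (n X11))))))" by (metis f303571 f6030)
  note f7 = a6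
  have f30: "(\<forall>X0 X1. ((i X0 X1) = (i (i (p X1) (m X0)) (i (p X0) (m X1)))))" by (metis f7)
  have f5923: "(\<forall>X10 X11. ((m (i (i one one) (i X10 X11))) = (i (i one (i X11 X10)) (n one))))" by (metis f24 f50)
  have f5983: "(\<forall>X10 X11. ((m (i (i one one) (i X10 X11))) = (i one (i (i X11 X10) one))))" by (metis f5923 f50)
  have f551: "(\<forall>X0 X1. ((i (i (i X0 X1) one) one) = (p (i X0 X1))))" by (metis f26 f33)
  have f1446: "(\<forall>X12 X13. ((i one (i (i X12 X13) one)) = (n (p (i X12 X13)))))" by (metis f28 f551)
  have f5984: "(\<forall>X10 X11. ((m (i (i one one) (i X10 X11))) = (n (p (i X11 X10)))))" by (metis f5983 f1446)
  have f5985: "(\<forall>X10 X11. ((m (i X10 X11)) = (n (p (i X11 X10)))))" by (metis f5984 f33)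
  have f6950: "(\<forall>X0 X1. ((p (i X0 X1)) = (n (m (i X1 X0)))))" by (metis f21 f5985)
  note f10 = a9
  have f31: "(\<forall>X0 X1. ((p (i X0 (i (n X0) X1))) = (i (p X0) (i (n (p X0)) (p X1)))))" by (metis f10)
  have f1841: "((m one) = (i (i one one) (m one)))" by (metis f23 f22)
  have f1859: "((i (i (m one) one) one) = (p (m one)))" by (metis f26 f1841)
  have f1890: "((p (i (m one) one)) = (i (p (m one)) one))" by (metis f551 f1859)
  have f11757: "(\<forall>X16. ((p (i (i (m one) one) (i (n (i (m one) one)) X16))) = (i (i (p (m one)) one) (i (n (i (p (m one)) one)) (p X16)))))" by (metis f31 f1890)
  have f11841: "(\<forall>X16. ((p (i (i (m one) one) (i (n (i (m one) one)) X16))) = (i (i (p (m one)) one) (i (i one (p (m one))) (p X16)))))" by (metis f11757 f28)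
  have f64: "(\<forall>X5. (one = (i (i X5 (n one)) one)))" by (metis f22 f49)
  have f1439: "(\<forall>X1. ((i one one) = (p (i X1 (n one)))))" by (metis f551 f64)
  have f6145: "((i one one) = (p (m one)))" by (metis f1439 f6012)
  have f6136: "((i one one) = (m one))" by (metis f6012 f29)
  have f6220: "((m one) = (p (m one)))" by (metis f6145 f6136)
  have f11842: "(\<forall>X16. ((p (i (i (m one) one) (i (n (i (m one) one)) X16))) = (i (i (m one) one) (i (i one (m one)) (p X16)))))" by (metis f11841 f6220)
  have f6144: "((m (i (i one one) (n one))) = (i (m one) (n one)))" by (metis f24 f6012)
  have f6216: "((m (i (i one one) (n one))) = (i one (n (m one))))" by (metis f6144 f49)
  have f51: "(\<forall>X0 X1. ((i (n X0) X1) = (i (n X1) X0)))" by (metis f29 f21)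
  have f85: "(\<forall>X2 X3. ((i X3 (n X2)) = (n (i (n X3) X2))))" by (metis f28 f51)
  have f6143: "((n (m one)) = (i one (n (n one))))" by (metis f85 f6012)
  have f6214: "((i one one) = (n (m one)))" by (metis f6143 f21)
  have f6215: "((m one) = (n (m one)))" by (metis f6214 f6136)
  have f6217: "((m (i (i one one) (n one))) = (i one (m one)))" by (metis f6216 f6215)
  have f190: "(\<forall>X25. ((n one) = (i (i X25 X25) (n one))))" by (metis f33 f38)
  have f6218: "((m (n one)) = (i one (m one)))" by (metis f6217 f190)
  have f5918: "(\<forall>X4. ((m (i (i one one) (n one))) = (i (n (i X4 X4)) (n one))))" by (metis f24 f364)
  have f5971: "(\<forall>X4. ((i (i X4 X4) (n one)) = (m (i (i one one) (n one)))))" by (metis f5918 f28)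
  have f5972: "(\<forall>X4. ((i (i X4 X4) (n one)) = (m (n one))))" by (metis f5971 f190)
  have f5973: "((n one) = (m (n one)))" by (metis f5972 f190)
  have f6219: "((n one) = (i one (m one)))" by (metis f6218 f5973)
  have f11843: "(\<forall>X16. ((p (i (i (m one) one) (i (n (i (m one) one)) X16))) = (i (i (m one) one) (i (n one) (p X16)))))" by (metis f11842 f6219)
  have f6147: "(one = (i (m one) one))" by (metis f64 f6012)
  have f11844: "(\<forall>X16. ((p (i one (i (n one) X16))) = (i one (i (n one) (p X16)))))" by (metis f11843 f6147)
  have f1438: "(\<forall>X0. ((i one one) = (p (i one X0))))" by (metis f551 f22)
  have f11845: "(\<forall>X16. ((i one one) = (i one (i (n one) (p X16)))))" by (metis f11844 f1438)
  have f11846: "(\<forall>X16. ((m one) = (i one (i (n one) (p X16)))))" by (metis f11845 f6136)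
  have f11980: "(\<forall>X3. ((n (m one)) = (i (i (n one) (p X3)) one)))" by (metis f28 f11846)
  have f12032: "(\<forall>X3. ((m one) = (i (i (n one) (p X3)) one)))" by (metis f11980 f6215)
  have f12081: "(\<forall>X0. ((i (m one) one) = (p (i (n one) (p X0)))))" by (metis f551 f12032)
  have f12136: "(\<forall>X0. (one = (p (i (n one) (p X0)))))" by (metis f12081 f6147)
  have f12184: "(\<forall>X3. ((n one) = (m (i (p X3) (n one)))))" by (metis f5985 f12136)
  have f12237: "(\<forall>X3. ((n one) = (m (i one (n (p X3))))))" by (metis f12184 f49)
  have f12285: "(\<forall>X0 X1. ((n one) = (m (i one (m (i X1 X0))))))" by (metis f12237 f5985)
  have f12451: "(\<forall>X4 X5. ((n (n one)) = (p (i (m (i X4 X5)) one))))" by (metis f6950 f12285)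
  have f12583: "(\<forall>X4 X5. (one = (p (i (m (i X4 X5)) one))))" by (metis f12451 f21)
  have f1836: "(\<forall>X0 X1. ((m (i X0 X1)) = (i (i one one) (m (i X0 X1)))))" by (metis f23 f33)
  have f12638: "(\<forall>X84 X85. (one = (p (i (m (m (i X84 X85))) one))))" by (metis f12583 f1836)
  have f14550: "(\<forall>X10 X11 X12. ((i (i (m (m (i X10 X11))) one) X12) = (i (i (p X12) (m (i (m (m (i X10 X11))) one))) (i one (m X12)))))" by (metis f30 f12638)
  have f6948: "(\<forall>X7. ((n (i one one)) = (m (i X7 one))))" by (metis f5985 f1438)
  have f7222: "(\<forall>X7. ((i one one) = (m (i X7 one))))" by (metis f6948 f28)
  have f7223: "(\<forall>X7. ((m one) = (m (i X7 one))))" by (metis f7222 f6136)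
  have f14573: "(\<forall>X10 X11 X12. ((i (i (m (m (i X10 X11))) one) X12) = (i (i (p X12) (m one)) (i one (m X12)))))" by (metis f14550 f7223)
  have f547: "(\<forall>X2 X3. ((i (i X3 one) one) = (p (i (i X2 X2) X3))))" by (metis f26 f279)
  have f6168: "(\<forall>X18. ((i (i X18 one) one) = (p (i (m one) X18))))" by (metis f547 f6012)
  have f25: "(\<forall>X0. ((i (i one one) (p X0)) = (p (i (i one one) X0))))" by (metis f5)
  have f37: "(\<forall>X0. ((i (i one one) (p X0)) = (i (i X0 one) one)))" by (metis f25 f26)
  have f1259: "(\<forall>X2 X3. ((i (i X3 one) one) = (i (i X2 X2) (p X3))))" by (metis f37 f279)
  have f6171: "(\<forall>X19. ((i (i X19 one) one) = (i (m one) (p X19))))" by (metis f1259 f6012)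
  have f10699: "(\<forall>X33. ((p (i one (i X33 one))) = (n (m (i (m one) (p X33))))))" by (metis f6950 f6171)
  have f6260: "(\<forall>X0. ((i (m one) (m X0)) = (m (i (m one) X0))))" by (metis f23 f6136)
  have f10785: "(\<forall>X33. ((p (i one (i X33 one))) = (n (i (m one) (m (p X33))))))" by (metis f10699 f6260)
  have f10786: "(\<forall>X33. ((p (i one (i X33 one))) = (i (m (p X33)) (m one))))" by (metis f10785 f28)
  have f10787: "(\<forall>X33. ((i one one) = (i (m (p X33)) (m one))))" by (metis f10786 f1438)
  have f10788: "(\<forall>X33. ((m one) = (i (m (p X33)) (m one))))" by (metis f10787 f6136)
  have f10868: "(\<forall>X0. ((n (m one)) = (i (m one) (m (p X0)))))" by (metis f28 f10788)
  have f10903: "(\<forall>X0. ((m one) = (i (m one) (m (p X0)))))" by (metis f10868 f6215)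
  have f10951: "(\<forall>X0. ((p (m one)) = (i (i (m (p X0)) one) one)))" by (metis f6168 f10903)
  have f10995: "(\<forall>X0. ((m one) = (i (i (m (p X0)) one) one)))" by (metis f10951 f6220)
  have f11053: "(\<forall>X2. ((i (m one) one) = (p (i (m (p X2)) one))))" by (metis f551 f10995)
  have f11115: "(\<forall>X2. (one = (p (i (m (p X2)) one))))" by (metis f11053 f6147)
  have f11759: "(\<forall>X19 X20. ((p (i (i (m (p X19)) one) (i (n (i (m (p X19)) one)) X20))) = (i one (i (n one) (p X20)))))" by (metis f31 f11115)
  have f11850: "(\<forall>X19 X20. ((m one) = (p (i (i (m (p X19)) one) (i (n (i (m (p X19)) one)) X20)))))" by (metis f11759 f11846)
  have f11171: "(\<forall>X4 X5. ((i (i (m (p X4)) one) X5) = (i (i (p X5) (m (i (m (p X4)) one))) (i one (m X5)))))" by (metis f30 f11115)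
  have f11219: "(\<forall>X4 X5. ((i (i (m (p X4)) one) X5) = (i (i (p X5) (m one)) (i one (m X5)))))" by (metis f11171 f7223)
  have f1267: "(\<forall>X2 X1. ((i (p X1) (i one one)) = (i (i (i X1 one) one) (i X2 X2))))" by (metis f196 f37)
  have f1277: "(\<forall>X1. ((i (p X1) (i one one)) = (i one (i X1 one))))" by (metis f1267 f196)
  have f1499: "(\<forall>X2 X3. ((i one (i X3 one)) = (i (p X3) (i X2 X2))))" by (metis f1277 f279)
  have f6172: "(\<forall>X20. ((i one (i X20 one)) = (i (p X20) (m one))))" by (metis f1499 f6012)
  have f11220: "(\<forall>X4 X5. ((i (i (m (p X4)) one) X5) = (i (i one (i X5 one)) (i one (m X5)))))" by (metis f11219 f6172)
  have f8222: "(\<forall>X16. ((i (i (m one) one) X16) = (i (i (p X16) (m (i (m one) one))) (i (i (p (m one)) one) (m X16)))))" by (metis f30 f1890)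
  have f8396: "(\<forall>X16. ((i (i (m one) one) X16) = (i (i (p X16) (m (i (m one) one))) (i (i (m one) one) (m X16)))))" by (metis f8222 f6220)
  have f8397: "(\<forall>X16. ((i one X16) = (i (i (p X16) (m one)) (i one (m X16)))))" by (metis f8396 f6147)
  have f8398: "(\<forall>X16. ((i one X16) = (i (i one (i X16 one)) (i one (m X16)))))" by (metis f8397 f6172)
  have f11221: "(\<forall>X4 X5. ((i (i (m (p X4)) one) X5) = (i one X5)))" by (metis f11220 f8398)
  have f11851: "(\<forall>X19 X20. ((m one) = (p (i one (i (n (i (m (p X19)) one)) X20)))))" by (metis f11850 f11221)
  have f11852: "(\<forall>X19 X20. ((m one) = (p (i one (i (i one (m (p X19))) X20)))))" by (metis f11851 f28)
  have f11170: "(\<forall>X3. ((n one) = (m (i one (m (p X3))))))" by (metis f5985 f11115)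
  have f11267: "(\<forall>X8 X7. ((i (i one (m (p X7))) X8) = (i (i (p X8) (n one)) (i (p (i one (m (p X7)))) (m X8)))))" by (metis f30 f11170)
  have f11314: "(\<forall>X8 X7. ((i (i (p X8) (n one)) (i (i one one) (m X8))) = (i (i one (m (p X7))) X8)))" by (metis f11267 f1438)
  have f11315: "(\<forall>X8 X7. ((i (i (p X8) (n one)) (i one (i (n one) X8))) = (i (i one (m (p X7))) X8)))" by (metis f11314 f6030)
  have f11316: "(\<forall>X8 X7. ((i (i one (n (p X8))) (i one (i (n one) X8))) = (i (i one (m (p X7))) X8)))" by (metis f11315 f49)
  have f8208: "(\<forall>X8. ((i (n one) X8) = (i (i (p X8) (n one)) (i (p (n one)) (m X8)))))" by (metis f30 f5973)
  have f553: "((i (i (n one) one) one) = (p (n one)))" by (metis f26 f190)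
  have f41: "(one = (i (n one) one))" by (metis f22 f38)
  have f560: "((i one one) = (p (n one)))" by (metis f553 f41)
  have f8361: "(\<forall>X8. ((i (n one) X8) = (i (i (p X8) (n one)) (i (i one one) (m X8)))))" by (metis f8208 f560)
  have f8362: "(\<forall>X8. ((i (n one) X8) = (i (i (p X8) (n one)) (i one (i (n one) X8)))))" by (metis f8361 f6030)
  have f8363: "(\<forall>X8. ((i (n one) X8) = (i (i one (n (p X8))) (i one (i (n one) X8)))))" by (metis f8362 f49)
  have f11317: "(\<forall>X8 X7. ((i (n one) X8) = (i (i one (m (p X7))) X8)))" by (metis f11316 f8363)
  have f11853: "(\<forall>X20. ((m one) = (p (i one (i (n one) X20)))))" by (metis f11852 f11317)
  have f12884: "(\<forall>X0. ((m one) = (p (i one (i (n X0) one)))))" by (metis f11853 f51)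
  have f1722: "(\<forall>X90 X88 X89. ((i X88 (n (i X89 X89))) = (n (i (i X90 X90) (n (n X88))))))" by (metis f85 f426)
  have f1822: "(\<forall>X90 X88 X89. ((i X88 (n (i X89 X89))) = (n (i (n X88) (i X90 X90)))))" by (metis f1722 f50)
  have f52: "(\<forall>X2 X3 X4. ((i (i X2 X3) X4) = (i (n X4) (i X3 X2))))" by (metis f29 f28)
  have f1823: "(\<forall>X90 X88 X89. ((i X88 (n (i X89 X89))) = (n (i (i X90 X90) X88))))" by (metis f1822 f52)
  have f1824: "(\<forall>X90 X88 X89. ((n (i (i X90 X90) X88)) = (i X88 (i X89 X89))))" by (metis f1823 f28)
  have f6865: "(\<forall>X10 X11 X12. ((m (i (i X11 X11) X10)) = (n (p (n (i (i X12 X12) X10))))))" by (metis f5985 f1824)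
  have f6970: "(\<forall>X10 X11 X12. ((m (i (i X11 X11) X10)) = (n (p (i X10 (i X12 X12))))))" by (metis f6865 f28)
  have f1530: "(\<forall>X6 X7. ((i (i (n X7) one) one) = (p (i X7 (i X6 X6)))))" by (metis f547 f50)
  have f6971: "(\<forall>X10 X11. ((m (i (i X11 X11) X10)) = (n (i (i (n X10) one) one))))" by (metis f6970 f1530)
  have f6972: "(\<forall>X10 X11. ((m (i (i X11 X11) X10)) = (i one (i (n X10) one))))" by (metis f6971 f28)
  have f6973: "(\<forall>X10. ((i one (i (n X10) one)) = (m (i (m one) X10))))" by (metis f6972 f6140)
  have f6974: "(\<forall>X10. ((i one (i (n X10) one)) = (i (m one) (m X10))))" by (metis f6973 f6260)
  have f12942: "(\<forall>X0. ((m one) = (p (i (m one) (m X0)))))" by (metis f12884 f6974)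
  have f13426: "(\<forall>X1. ((m one) = (i (i (m X1) one) one)))" by (metis f12942 f6168)
  have f13847: "(\<forall>X3. ((i (m one) one) = (p (i (m X3) one))))" by (metis f551 f13426)
  have f13890: "(\<forall>X3. (one = (p (i (m X3) one))))" by (metis f13847 f6147)
  have f13950: "(\<forall>X6. ((n one) = (m (i one (m X6)))))" by (metis f5985 f13890)
  have f14044: "(\<forall>X16 X15. ((i X16 (i one (m X15))) = (i (i (p (i one (m X15))) (m X16)) (i (p X16) (n one)))))" by (metis f30 f13950)
  have f14068: "(\<forall>X16 X15. ((i X16 (i one (m X15))) = (i (i (p (i one (m X15))) (m X16)) (i one (n (p X16))))))" by (metis f14044 f49)
  have f14069: "(\<forall>X16 X15. ((i X16 (i one (m X15))) = (i (i (i one one) (m X16)) (i one (n (p X16))))))" by (metis f14068 f1438)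
  have f14070: "(\<forall>X16 X15. ((i X16 (i one (m X15))) = (i (i one (i (n one) X16)) (i one (n (p X16))))))" by (metis f14069 f6030)
  have f8200: "(\<forall>X17. ((i X17 (n one)) = (i (i (i one one) (m X17)) (i (p X17) (m (n one))))))" by (metis f30 f560)
  have f8340: "(\<forall>X17. ((i X17 (n one)) = (i (i (i one one) (m X17)) (i (p X17) (n one)))))" by (metis f8200 f5973)
  have f8341: "(\<forall>X17. ((i X17 (n one)) = (i (i (i one one) (m X17)) (i one (n (p X17))))))" by (metis f8340 f49)
  have f8342: "(\<forall>X17. ((i X17 (n one)) = (i (i one (i (n one) X17)) (i one (n (p X17))))))" by (metis f8341 f6030)
  have f14071: "(\<forall>X16 X15. ((i X16 (n one)) = (i X16 (i one (m X15)))))" by (metis f14070 f8342)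
  have f14574: "(\<forall>X10 X11 X12. ((i (i (m (m (i X10 X11))) one) X12) = (i (i (p X12) (m one)) (n one))))" by (metis f14573 f14071)
  have f14575: "(\<forall>X10 X11 X12. ((i (i (m (m (i X10 X11))) one) X12) = (i one (i (m one) (p X12)))))" by (metis f14574 f50)
  have f13951: "(\<forall>X8 X7. ((i (i (m X7) one) X8) = (i (i (p X8) (m (i (m X7) one))) (i one (m X8)))))" by (metis f30 f13890)
  have f13984: "(\<forall>X8 X7. ((i (i (m X7) one) X8) = (i (i (p X8) (m one)) (i one (m X8)))))" by (metis f13951 f7223)
  have f13985: "(\<forall>X8 X7. ((i (i (m X7) one) X8) = (i (i one (i X8 one)) (i one (m X8)))))" by (metis f13984 f6172)
  have f13986: "(\<forall>X8 X7. ((i one X8) = (i (i (m X7) one) X8)))" by (metis f13985 f8398)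
  have f14576: "(\<forall>X12. ((i one X12) = (i one (i (m one) (p X12)))))" by (metis f14575 f13986)
  have f5924: "(\<forall>X12. ((m (i (i one one) (i X12 (n one)))) = (i (m (i (i one one) X12)) (n one))))" by (metis f24 f24)
  have f5986: "(\<forall>X12. ((m (i (i one one) (i X12 (n one)))) = (i one (n (m (i (i one one) X12))))))" by (metis f5924 f49)
  have f5987: "(\<forall>X12. ((m (i (i one one) (i X12 (n one)))) = (i one (n (i (i one one) (m X12))))))" by (metis f5986 f23)
  have f5988: "(\<forall>X12. ((m (i (i one one) (i X12 (n one)))) = (i one (i (m X12) (i one one)))))" by (metis f5987 f28)
  have f5989: "(\<forall>X12. ((i one (i (m X12) (i one one))) = (m (i X12 (n one)))))" by (metis f5988 f33)
  have f5929: "(\<forall>X21. ((m (i (i one one) (n X21))) = (i (i one X21) (n one))))" by (metis f24 f29)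
  have f6004: "(\<forall>X21. ((m (i (i one one) (n X21))) = (i one (i X21 one))))" by (metis f5929 f50)
  have f6005: "(\<forall>X21. ((i one (i X21 one)) = (m (i X21 (i one one)))))" by (metis f6004 f50)
  have f34286: "(\<forall>X5. ((m (i (i X5 (i one one)) (n one))) = (i one (i (i one (i X5 one)) (i one one)))))" by (metis f5989 f6005)
  have f34398: "(\<forall>X5. ((i one (i (i X5 one) one)) = (m (i (i X5 (i one one)) (n one)))))" by (metis f34286 f196)
  have f34399: "(\<forall>X5. ((i one (i (i X5 one) one)) = (m (i one (i (i one one) X5)))))" by (metis f34398 f50)
  have f34400: "(\<forall>X5. ((i one (i (i X5 one) one)) = (m (i one (i (m one) X5)))))" by (metis f34399 f6136)
  have f14551: "(\<forall>X14 X15 X13. ((i X15 (i (m (m (i X13 X14))) one)) = (i (i one (m X15)) (i (p X15) (m (i (m (m (i X13 X14))) one))))))" by (metis f30 f12638)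
  have f14577: "(\<forall>X14 X15 X13. ((i X15 (i (m (m (i X13 X14))) one)) = (i (i one (m X15)) (i (p X15) (m one)))))" by (metis f14551 f7223)
  have f14045: "(\<forall>X18 X17. ((i (i one (m X17)) X18) = (i (i (p X18) (n one)) (i (p (i one (m X17))) (m X18)))))" by (metis f30 f13950)
  have f14072: "(\<forall>X18 X17. ((i (i one (m X17)) X18) = (i (i (p X18) (n one)) (i (i one one) (m X18)))))" by (metis f14045 f1438)
  have f14073: "(\<forall>X18 X17. ((i (i one (m X17)) X18) = (i (i (p X18) (n one)) (i one (i (n one) X18)))))" by (metis f14072 f6030)
  have f14074: "(\<forall>X18 X17. ((i (i one (m X17)) X18) = (i (i one (n (p X18))) (i one (i (n one) X18)))))" by (metis f14073 f49)
  have f14075: "(\<forall>X18 X17. ((i (n one) X18) = (i (i one (m X17)) X18)))" by (metis f14074 f8363)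
  have f14578: "(\<forall>X14 X15 X13. ((i X15 (i (m (m (i X13 X14))) one)) = (i (n one) (i (p X15) (m one)))))" by (metis f14577 f14075)
  have f14579: "(\<forall>X14 X15 X13. ((i X15 (i (m (m (i X13 X14))) one)) = (i (i (m one) (p X15)) one)))" by (metis f14578 f52)
  have f10639: "(\<forall>X9. ((i (m one) (p (i X9 one))) = (i (i (m one) (p X9)) one)))" by (metis f6171 f6171)
  have f6151: "(\<forall>X0 X1. ((i X0 X1) = (i (m one) (i X0 X1))))" by (metis f33 f6012)
  have f8490: "(\<forall>X70 X69. ((p (i X69 X70)) = (i (m one) (p (i X69 X70)))))" by (metis f6151 f551)
  have f10712: "(\<forall>X9. ((p (i X9 one)) = (i (i (m one) (p X9)) one)))" by (metis f10639 f8490)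
  have f14580: "(\<forall>X14 X15 X13. ((i X15 (i (m (m (i X13 X14))) one)) = (p (i X15 one))))" by (metis f14579 f10712)
  have f13952: "(\<forall>X10 X9. ((i X10 (i (m X9) one)) = (i (i one (m X10)) (i (p X10) (m (i (m X9) one))))))" by (metis f30 f13890)
  have f13987: "(\<forall>X10 X9. ((i X10 (i (m X9) one)) = (i (i one (m X10)) (i (p X10) (m one)))))" by (metis f13952 f7223)
  have f13988: "(\<forall>X10 X9. ((i X10 (i (m X9) one)) = (i (i one (m X10)) (i one (i X10 one)))))" by (metis f13987 f6172)
  have f8199: "(\<forall>X16. ((i X16 (i (m one) one)) = (i (i (i (p (m one)) one) (m X16)) (i (p X16) (m (i (m one) one))))))" by (metis f30 f1890)
  have f8336: "(\<forall>X16. ((i X16 (i (m one) one)) = (i (i (i (p (m one)) one) (m X16)) (i (p X16) (m one)))))" by (metis f8199 f7223)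
  have f8337: "(\<forall>X16. ((i X16 (i (m one) one)) = (i (i (i (p (m one)) one) (m X16)) (i one (i X16 one)))))" by (metis f8336 f6172)
  have f8338: "(\<forall>X16. ((i X16 (i (m one) one)) = (i (i (i (m one) one) (m X16)) (i one (i X16 one)))))" by (metis f8337 f6220)
  have f8339: "(\<forall>X16. ((i X16 one) = (i (i one (m X16)) (i one (i X16 one)))))" by (metis f8338 f6147)
  have f13989: "(\<forall>X10 X9. ((i X10 one) = (i X10 (i (m X9) one))))" by (metis f13988 f8339)
  have f14581: "(\<forall>X15. ((i X15 one) = (p (i X15 one))))" by (metis f14580 f13989)
  have f14643: "(\<forall>X3. ((m (i one X3)) = (n (i X3 one))))" by (metis f5985 f14581)
  have f14687: "(\<forall>X3. ((i one X3) = (m (i one X3))))" by (metis f14643 f28)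
  have f34401: "(\<forall>X5. ((i one (i (i X5 one) one)) = (i one (i (m one) X5))))" by (metis f34400 f14687)
  have f34402: "(\<forall>X5. ((i one (i (m one) X5)) = (n (p (i X5 one)))))" by (metis f34401 f1446)
  have f34403: "(\<forall>X5. ((m (i one X5)) = (i one (i (m one) X5))))" by (metis f34402 f5985)
  have f34404: "(\<forall>X5. ((i one X5) = (i one (i (m one) X5))))" by (metis f34403 f14687)
  have f45484: "(\<forall>X1. ((i one X1) = (i one (p X1))))" by (metis f14576 f34404)
  have f7849: "(\<forall>X34 X32 X33. ((p (i X33 (i X32 X32))) = (n (m (n (i X33 (i X34 X34)))))))" by (metis f6950 f1811)
  have f7956: "(\<forall>X34 X32 X33. ((p (i X33 (i X32 X32))) = (n (m (i (i X34 X34) X33)))))" by (metis f7849 f28)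
  have f1834: "(\<forall>X2 X3. ((i (i X2 X2) (m X3)) = (m (i (i X2 X2) X3))))" by (metis f23 f279)
  have f7957: "(\<forall>X34 X32 X33. ((p (i X33 (i X32 X32))) = (n (i (i X34 X34) (m X33)))))" by (metis f7956 f1834)
  have f7958: "(\<forall>X32 X33. ((p (i X33 (i X32 X32))) = (n (i (m one) (m X33)))))" by (metis f7957 f6140)
  have f7959: "(\<forall>X32 X33. ((p (i X33 (i X32 X32))) = (i (m X33) (m one))))" by (metis f7958 f28)
  have f7960: "(\<forall>X33. ((i (m X33) (m one)) = (p (i X33 (m one)))))" by (metis f7959 f6140)
  have f45616: "(\<forall>X5. ((i one (i X5 (m one))) = (i one (i (m X5) (m one)))))" by (metis f45484 f7960)
  have f6164: "(\<forall>X10 X11. ((i X10 (i X11 X11)) = (i (m one) (n X10))))" by (metis f426 f6012)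
  have f6228: "(\<forall>X10. ((i (m one) (n X10)) = (i X10 (m one))))" by (metis f6164 f6140)
  have f34647: "(\<forall>X4. ((i one (n X4)) = (i one (i X4 (m one)))))" by (metis f34404 f6228)
  have f45706: "(\<forall>X5. ((i one (i X5 (m one))) = (i one (n (m X5)))))" by (metis f45616 f34647)
  have f45707: "(\<forall>X5. ((i one (n X5)) = (i one (n (m X5)))))" by (metis f45706 f34647)
  have f35797: "(\<forall>X21 X22. ((i (i X21 (m one)) one) = (i (i one (n X21)) (i X22 X22))))" by (metis f196 f34647)
  have f257: "(\<forall>X2 X0 X1. ((i (n X1) X0) = (i (i X1 (n X0)) (i X2 X2))))" by (metis f196 f49)
  have f35903: "(\<forall>X21. ((i (n one) X21) = (i (i X21 (m one)) one)))" by (metis f35797 f257)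
  have f41011: "(\<forall>X20. ((i one (i X20 (m one))) = (n (i (n one) X20))))" by (metis f28 f35903)
  have f41118: "(\<forall>X20. ((i X20 (n one)) = (i one (i X20 (m one)))))" by (metis f41011 f28)
  have f41211: "(\<forall>X33. ((p (i (i X33 (m one)) one)) = (n (m (i X33 (n one))))))" by (metis f6950 f41118)
  have f41301: "(\<forall>X33. ((p (i (n one) X33)) = (p (i (i X33 (m one)) one))))" by (metis f41211 f6950)
  have f34699: "(\<forall>X13. ((i (i (m one) X13) one) = (n (i one X13))))" by (metis f28 f34404)
  have f34788: "(\<forall>X13. ((i X13 one) = (i (i (m one) X13) one)))" by (metis f34699 f28)
  have f35563: "(\<forall>X4. ((i (n X4) one) = (i (i X4 (m one)) one)))" by (metis f34788 f6228)
  have f41302: "(\<forall>X33. ((p (i (n one) X33)) = (p (i (n X33) one))))" by (metis f41301 f35563)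
  have f41303: "(\<forall>X33. ((i (n X33) one) = (p (i (n one) X33))))" by (metis f41302 f14581)
  have f41355: "(\<forall>X2. ((m (i X2 (n one))) = (n (i (n X2) one))))" by (metis f5985 f41303)
  have f41497: "(\<forall>X2. ((m (i X2 (n one))) = (i one (n X2))))" by (metis f41355 f28)
  have f45928: "(\<forall>X8. ((i one (n (i X8 (n one)))) = (i one (n (i one (n X8))))))" by (metis f45707 f41497)
  have f46046: "(\<forall>X8. ((i one (n (i X8 (n one)))) = (i one (i (n X8) one))))" by (metis f45928 f28)
  have f46047: "(\<forall>X8. ((i one (n (i X8 (n one)))) = (i (m one) (m X8))))" by (metis f46046 f6974)
  have f46048: "(\<forall>X8. ((i one (i (n one) X8)) = (i (m one) (m X8))))" by (metis f46047 f28)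
  have f303573: "(\<forall>X11 X12. ((n (j X11 X11)) = (i (i (m (i X12 X12)) (m X11)) (i (m one) (m (n X11))))))" by (metis f303572 f46048)
  have f24724: "(\<forall>X4. ((m (i X4 (m one))) = (i (m one) (m (n X4)))))" by (metis f6260 f6228)
  have f6873: "(\<forall>X34 X32 X33. ((m (i X33 (i X32 X32))) = (n (p (n (i X33 (i X34 X34)))))))" by (metis f5985 f1811)
  have f6987: "(\<forall>X34 X32 X33. ((m (i X33 (i X32 X32))) = (n (p (i (i X34 X34) X33)))))" by (metis f6873 f28)
  have f6988: "(\<forall>X32 X33. ((m (i X33 (i X32 X32))) = (n (i (i X33 one) one))))" by (metis f6987 f547)
  have f6989: "(\<forall>X32 X33. ((m (i X33 (i X32 X32))) = (i one (i X33 one))))" by (metis f6988 f28)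
  have f6990: "(\<forall>X33. ((i one (i X33 one)) = (m (i X33 (m one)))))" by (metis f6989 f6140)
  have f24806: "(\<forall>X4. ((i one (i X4 one)) = (i (m one) (m (n X4)))))" by (metis f24724 f6990)
  have f303574: "(\<forall>X11 X12. ((n (j X11 X11)) = (i (i (m (i X12 X12)) (m X11)) (i one (i X11 one)))))" by (metis f303573 f24806)
  have f5921: "(\<forall>X7. ((i (n one) (n one)) = (m (i (i one one) (i X7 X7)))))" by (metis f24 f190)
  have f5978: "(\<forall>X7. ((i (n one) (n one)) = (m (i X7 X7))))" by (metis f5921 f33)
  have f5979: "(\<forall>X7. ((i one one) = (m (i X7 X7))))" by (metis f5978 f29)
  have f303575: "(\<forall>X11. ((n (j X11 X11)) = (i (i (i one one) (m X11)) (i one (i X11 one)))))" by (metis f303574 f5979)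
  have f303576: "(\<forall>X11. ((i (i one (i (n one) X11)) (i one (i X11 one))) = (n (j X11 X11))))" by (metis f303575 f6030)
  have f8191: "(\<forall>X0 X1. ((i X1 (i X0 X0)) = (i (i (i one one) (m X1)) (i (p X1) (m (i X0 X0))))))" by (metis f30 f564)
  have f8312: "(\<forall>X0 X1. ((i X1 (i X0 X0)) = (i (i (i one one) (m X1)) (i (p X1) (i one one)))))" by (metis f8191 f5979)
  have f8313: "(\<forall>X0 X1. ((i X1 (i X0 X0)) = (i (i (i one one) (m X1)) (i one (i X1 one)))))" by (metis f8312 f1277)
  have f8314: "(\<forall>X0 X1. ((i X1 (i X0 X0)) = (i (i one (i (n one) X1)) (i one (i X1 one)))))" by (metis f8313 f6030)
  have f8315: "(\<forall>X1. ((i (i one (i (n one) X1)) (i one (i X1 one))) = (i X1 (m one))))" by (metis f8314 f6140)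
  have f303577: "(\<forall>X11. ((i X11 (m one)) = (n (j X11 X11))))" by (metis f303576 f8315)
  have f305516: "(\<forall>X8. ((j X8 X8) = (n (i X8 (m one)))))" by (metis f23977 f303577)
  have f306495: "((j sK0 sK0) \<noteq> (j sK0 sK0))" using f6199 f305516 by blast
  show False using f306495 by blast
qed

lemma qw_facts:
  assumes "quasi_wajsberg imp neg pl mi one"
  shows "\<And>x. qw_join imp neg pl mi x x = imp (qw_zero imp one) x"
    and "\<And>x y z. imp (imp z z) (imp x y) = imp x y"
    and "\<And>x y. qw_join imp neg pl mi x y = qw_join imp neg pl mi y x"
    and "\<And>x y z. imp x (qw_join imp neg pl mi y z) = qw_join imp neg pl mi (imp x y) (imp x z)"
proof -
  note A = assms[unfolded quasi_wajsberg_def]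
  note c1 = A[THEN conjunct1]
  note c2 = A[THEN conjunct2, THEN conjunct1]
  note c3 = A[THEN conjunct2, THEN conjunct2, THEN conjunct1]
  note c4 = A[THEN conjunct2, THEN conjunct2, THEN conjunct2, THEN conjunct1]
  note c5 = A[THEN conjunct2, THEN conjunct2, THEN conjunct2, THEN conjunct2, THEN conjunct1]
  note c6 = A[THEN conjunct2, THEN conjunct2, THEN conjunct2, THEN conjunct2, THEN conjunct2, THEN conjunct1]
  note c7 = A[THEN conjunct2, THEN conjunct2, THEN conjunct2, THEN conjunct2, THEN conjunct2, THEN conjunct2, THEN conjunct1]
  note c8 = A[THEN conjunct2, THEN conjunct2, THEN conjunct2, THEN conjunct2, THEN conjunct2, THEN conjunct2, THEN conjunct2, THEN conjunct1]
  note c9 = A[THEN conjunct2, THEN conjunct2, THEN conjunct2, THEN conjunct2, THEN conjunct2, THEN conjunct2, THEN conjunct2, THEN conjunct2, THEN conjunct1]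
  note c10 = A[THEN conjunct2, THEN conjunct2, THEN conjunct2, THEN conjunct2, THEN conjunct2, THEN conjunct2, THEN conjunct2, THEN conjunct2, THEN conjunct2, THEN conjunct1]
  note c11 = A[THEN conjunct2, THEN conjunct2, THEN conjunct2, THEN conjunct2, THEN conjunct2, THEN conjunct2, THEN conjunct2, THEN conjunct2, THEN conjunct2, THEN conjunct2, THEN conjunct1]
  note c12 = A[THEN conjunct2, THEN conjunct2, THEN conjunct2, THEN conjunct2, THEN conjunct2, THEN conjunct2, THEN conjunct2, THEN conjunct2, THEN conjunct2, THEN conjunct2, THEN conjunct2, THEN conjunct1]
  note c13 = A[THEN conjunct2, THEN conjunct2, THEN conjunct2, THEN conjunct2, THEN conjunct2, THEN conjunct2, THEN conjunct2, THEN conjunct2, THEN conjunct2, THEN conjunct2, THEN conjunct2, THEN conjunct2]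
  show "\<And>x. qw_join imp neg pl mi x x = imp (qw_zero imp one) x"
    unfolding qw_zero_def
    by (rule join_idem_raw[where i=imp and n=neg and p=pl and m=mi and one=one and j="qw_join imp neg pl mi", OF c1[rule_format] c2[rule_format] c3[rule_format] c4[rule_format]
       c5[rule_format] c6[rule_format] c7[rule_format] c8[rule_format] c9[rule_format] c10[rule_format]
       qw_join_def c11[rule_format] c12[rule_format] c13[rule_format], symmetric])
  show "\<And>x y z. imp (imp z z) (imp x y) = imp x y" by (rule c4[rule_format])
  show "\<And>x y. qw_join imp neg pl mi x y = qw_join imp neg pl mi y x" by (rule c11[rule_format])
  show "\<And>x y z. imp x (qw_join imp neg pl mi y z) = qw_join imp neg pl mi (imp x y) (imp x z)"
    by (rule c13[rule_format])
qed

theorem proposition4p2: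
  fixes imp :: "'a \<Rightarrow> 'a \<Rightarrow> 'a" and neg pl mi :: "'a \<Rightarrow> 'a" and one :: 'a
  assumes "quasi_wajsberg imp neg pl mi one"
  defines "\<mu> \<equiv> qw_mu imp neg pl mi one" and "\<tau> \<equiv> qw_tau imp one"
  shows "(\<forall>x y. (x, y) \<in> \<mu> \<longleftrightarrow> imp (qw_zero imp one) x = imp (qw_zero imp one) y)
         \<and> \<mu> \<inter> \<tau> = Id
         \<and> rel_gen \<mu> \<tau> = UNIV
         \<and> (\<mu> O \<tau> = UNIV \<longleftrightarrow> (\<forall>x y. \<mu> `` {x} \<inter> \<tau> `` {y} \<noteq> {}))"
proof -
  define Z where "Z = qw_zero imp one"
  define J where "J = qw_join imp neg pl mi"
  have idem: "\<And>x. J x x = imp Z x" using qw_facts(1)[OF assms(1)] unfolding J_def Z_def .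
  have A4: "\<And>x y z. imp (imp z z) (imp x y) = imp x y" using qw_facts(2)[OF assms(1)] .
  have comm: "\<And>x y. J x y = J y x" using qw_facts(3)[OF assms(1)] unfolding J_def .
  have A12: "\<And>x y z. imp x (J y z) = J (imp x y) (imp x z)" using qw_facts(4)[OF assms(1)] unfolding J_def .
  have ZZ: "\<And>x. imp Z (imp Z x) = imp Z x" unfolding Z_def qw_zero_def by (rule A4)
  have JR: "\<And>x y. imp Z (J x y) = J x y" unfolding Z_def qw_zero_def J_def qw_join_def by (rule A4)
  have le: "\<And>x y. qw_le imp neg pl mi one x y \<longleftrightarrow> J x y = imp Z y"
    unfolding qw_le_def J_def Z_def by simp
  have P1: "\<And>x y. (x, y) \<in> \<mu> \<longleftrightarrow> imp Z x = imp Z y"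
  proof -
    fix x y
    show "(x, y) \<in> \<mu> \<longleftrightarrow> imp Z x = imp Z y"
    proof
      assume "(x, y) \<in> \<mu>"
      then have "J x y = imp Z y" "J y x = imp Z x" unfolding \<mu>_def qw_mu_def le by auto
      then show "imp Z x = imp Z y" using comm by metis
    next
      assume h: "imp Z x = imp Z y"
      have "J x y = imp Z y"
      proof -
        have "J x y = imp Z (J x y)" using JR by simp
        also have "\<dots> = J (imp Z x) (imp Z y)" using A12 by simp
        also have "\<dots> = imp Z (imp Z y)" using h idem by simp
        also have "\<dots> = imp Z y" using ZZ by simp
        finally show ?thesis .
      qed
      moreover have "J y x = imp Z x"
      proof -
        have "J y x = imp Z (J y x)" using JR by simp
        also have "\<dots> = J (imp Z y) (imp Z x)" using A12 by simp
        also have "\<dots> = imp Z (imp Z x)" using h idem by simp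
        also have "\<dots> = imp Z x" using ZZ by simp
        finally show ?thesis .
      qed
      ultimately show "(x, y) \<in> \<mu>" unfolding \<mu>_def qw_mu_def le by auto
    qed
  qed
  have tau: "\<And>x y. (x, y) \<in> \<tau> \<longleftrightarrow> x = y \<or> (imp Z x = x \<and> imp Z y = y)"
    unfolding \<tau>_def qw_tau_def qw_R_def Z_def by auto
  have P2: "\<mu> \<inter> \<tau> = Id"
  proof
    show "\<mu> \<inter> \<tau> \<subseteq> Id"
    proof
      fix p assume "p \<in> \<mu> \<inter> \<tau>"
      then obtain x y where p: "p = (x, y)" "(x, y) \<in> \<mu>" "(x, y) \<in> \<tau>" by (cases p) auto
      then show "p \<in> Id" using P1 tau by auto
    qed
    show "Id \<subseteq> \<mu> \<inter> \<tau>" using P1 tau by auto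
  qed
  have P3: "rel_gen \<mu> \<tau> = UNIV"
  proof -
    have "(x, y) \<in> foldr (O) [\<mu>, \<tau>, \<mu>] Id" for x y
    proof -
      have "(x, imp Z x) \<in> \<mu>" using P1 ZZ by simp
      moreover have "(imp Z x, imp Z y) \<in> \<tau>" using tau ZZ by simp
      moreover have "(imp Z y, y) \<in> \<mu>" using P1 ZZ by simp
      ultimately show ?thesis by (simp del: relcomp.simps) (meson relcompI)
    qed
    then have H: "\<And>p. p \<in> foldr (O) [\<mu>, \<tau>, \<mu>] Id" by (metis surj_pair)
    have mem: "foldr (O) [\<mu>, \<tau>, \<mu>] Id \<in> {foldr (O) \<theta>s Id | \<theta>s. \<theta>s \<noteq> [] \<and> set \<theta>s \<subseteq> {\<mu>, \<tau>}}"
      apply (rule CollectI)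
      apply (rule exI[where x="[\<mu>, \<tau>, \<mu>]"])
      by simp
    have "\<And>p. p \<in> rel_gen \<mu> \<tau>" unfolding rel_gen_def by (rule UnionI[OF mem H])
    then show ?thesis by auto
  qed
  have symt: "\<And>x y. (x, y) \<in> \<tau> \<longleftrightarrow> (y, x) \<in> \<tau>" using tau by auto
  have P4: "\<mu> O \<tau> = UNIV \<longleftrightarrow> (\<forall>x y. \<mu> `` {x} \<inter> \<tau> `` {y} \<noteq> {})"
  proof
    assume h: "\<mu> O \<tau> = UNIV"
    show "\<forall>x y. \<mu> `` {x} \<inter> \<tau> `` {y} \<noteq> {}"
    proof (intro allI)
      fix x y
      have "(x, y) \<in> \<mu> O \<tau>" using h by simp
      then obtain z where "(x, z) \<in> \<mu>" "(z, y) \<in> \<tau>" by blast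
      then show "\<mu> `` {x} \<inter> \<tau> `` {y} \<noteq> {}" using symt by blast
    qed
  next
    assume h: "\<forall>x y. \<mu> `` {x} \<inter> \<tau> `` {y} \<noteq> {}"
    show "\<mu> O \<tau> = UNIV"
    proof (rule set_eqI)
      fix p :: "'a \<times> 'a"
      obtain x y where p: "p = (x, y)" by (cases p)
      from h obtain z where "(x, z) \<in> \<mu>" "(y, z) \<in> \<tau>" by blast
      then show "p \<in> \<mu> O \<tau> \<longleftrightarrow> p \<in> UNIV" using p symt by blast
    qed
  qed
  show ?thesis using P1 P2 P3 P4 unfolding Z_def by blast
qed

end
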